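(* In the setting described in the context, for the iterates of Method 2 one has $\operatorname{zer}(A+B)\subseteq T_k\cap\Gamma_k$ for all $k\in\mathbb N$.
   Context: Let $\mathcal H$ be a real Hilbert space with inner product $\langle\cdot,\cdot\rangle$ and norm $\|\cdot\|$. Let $A_1:\mathcal H\to\mathcal H$ be $\beta$-cocoercive for some $\beta>0$ (i.e. $\langle A_1x-A_1y,x-y\rangle\ge\beta\|A_1x-A_1y\|^2$ for all $x,y$), let $A_2:\mathcal H\to\mathcal H$ be maximally monotone and uniformly continuous, let $B:\mathcal H\rightrightarrows\mathcal H$ be maximally monotone, and set $A:=A_1+A_2$. Assume $\operatorname{zer}(A+B):=\{x:0\in Ax+Bx\}\neq\emptyset$. $J_{\alpha B}:=(I+\alpha B)^{-1}$ for $\alpha>0$, and $P_C$ denotes the orthogonal projection onto a nonempty closed convex set $C$. Fix $\theta,\delta\in(0,1)$, $\bar\delta>0$ with $1-\delta-\bar\delta>0$, and $\alpha_{-1}>0$ with $\alpha_{-1}\le4\beta\bar\delta$. Conceptual Algorithm: pick $x^0\in\mathcal H$. Given $x^k$ and $\alpha_{k-1}$, for $j\in\mathbb N$ let $\bar x^k_j:=J_{\alpha_{k-1}\theta^jB}(x^k-\alpha_{k-1}\theta^jAx^k)$ and let $j(k)$ be the smallest $j\in\mathbb N$ with $\alpha_{k-1}\theta^j\langle A_2x^k-A_2\bar x^k_j,x^k-\bar x^k_j\rangle\le\delta\|x^k-\bar x^k_j\|^2$. Set $\alpha_k:=\alpha_{k-1}\theta^{j(k)}$, $\bar x^k:=J_{\alpha_kB}(x^k-\alpha_kAx^k)$,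 $r_k:=\frac{\bar\delta}{\alpha_k}\|x^k-\bar x^k\|^2$, $T_k:=\{x\in\mathcal H:\langle \frac{x^k-\bar x^k}{\alpha_k}-(A_2x^k-A_2\bar x^k),x-\bar x^k\rangle\le r_k\}$ and $\Gamma_k:=\{x\in\mathcal H:\langle x^0-x^k,x-x^k\rangle\le0\}$. Method 2 sets $x^{k+1}:=P_{T_k\cap\Gamma_k}(x^0)$ and stops if $x^{k+1}=x^k$. *)

theory Defs
  imports "HOL-Analysis.Analysis"
begin

text \<open>Real Hilbert space: type class real_inner together with complete_space.
  Set-valued operators are modelled as functions 'a => 'a set.\<close>

definition monotone_op :: "('a::real_inner \<Rightarrow> 'a set) \<Rightarrow> bool" where
  "monotone_op B \<longleftrightarrow> (\<forall>x y u v. u \<in> B x \<longrightarrow> v \<in> B y \<longrightarrow> inner (u - v) (x - y) \<ge> 0)"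

definition maximal_monotone :: "('a::real_inner \<Rightarrow> 'a set) \<Rightarrow> bool" where
  "maximal_monotone B \<longleftrightarrow> monotone_op B \<and>
     (\<forall>x u. (\<forall>y v. v \<in> B y \<longrightarrow> inner (u - v) (x - y) \<ge> 0) \<longrightarrow> u \<in> B x)"

definition cocoercive :: "real \<Rightarrow> ('a::real_inner \<Rightarrow> 'a) \<Rightarrow> bool" where
  "cocoercive \<beta> T \<longleftrightarrow> (\<forall>x y. inner (T x - T y) (x - y) \<ge> \<beta> * (norm (T x - T y))\<^sup>2)"

definition zer_sum :: "('a::real_vector \<Rightarrow> 'a) \<Rightarrow> ('a \<Rightarrow> 'a set) \<Rightarrow> 'a set" where
  "zer_sum A B = {x. 0 \<in> (\<lambda>b. A x + b) ` B x}"

text \<open>Resolvent J_{\<alpha>B} = (I + \<alpha>B)^{-1}, as a (single-valued) function.\<close>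
definition resolvent :: "real \<Rightarrow> ('a::real_vector \<Rightarrow> 'a set) \<Rightarrow> 'a \<Rightarrow> 'a" where
  "resolvent \<alpha> B z = (THE y. z \<in> (\<lambda>b. y + \<alpha> *\<^sub>R b) ` B y)"

definition proj :: "'a::real_normed_vector set \<Rightarrow> 'a \<Rightarrow> 'a" where
  "proj C z = (THE p. p \<in> C \<and> (\<forall>y\<in>C. norm (z - p) \<le> norm (z - y)))"

end

theory Submission
  imports Defs
begin

lemma small_t:
  fixes a b :: real
  assumes "\<And>t. 0 < t \<Longrightarrow> t \<le> 1 \<Longrightarrow> 0 \<le> a + t * b"
  shows "0 \<le> a"
proof (rule ccontr)
  assume "\<not> 0 \<le> a"
  hence a: "a < 0" by simp
  define t where "t = min 1 (-a / (2 * (\<bar>b\<bar> + 1)))"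
  have t0: "0 < t" using a by (simp add: t_def field_simps)
  have t1: "t \<le> 1" by (simp add: t_def)
  have "t * b \<le> t * \<bar>b\<bar>" using t0 by (simp add: mult_left_mono)
  also have "\<dots> \<le> (-a / (2 * (\<bar>b\<bar> + 1))) * \<bar>b\<bar>"
    by (rule mult_right_mono) (auto simp: t_def)
  also have "\<dots> \<le> -a/2"
    using a by (simp add: field_simps)
  finally have "a + t * b < 0" using a by simp
  with assms[OF t0 t1] show False by simp
qed

lemma par_mid:
  fixes p q :: "'b::real_inner"
  shows "(norm ((1/2) *\<^sub>R (p+q)))\<^sup>2 = (norm p)\<^sup>2/2 + (norm q)\<^sup>2/2 - (norm (p-q))\<^sup>2/4"
  by (simp add: power2_norm_eq_inner inner_add_left inner_add_right inner_diff_left inner_diff_right inner_commute field_simps)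

lemma lin_aux1: "(m::real) \<le> (a + b)/2 - q \<Longrightarrow> a < m + x \<Longrightarrow> b < m + y \<Longrightarrow> q \<le> (x+y)/2"
  by (simp add: field_simps)

lemma lin_aux2: "(x::real) \<le> z \<Longrightarrow> y \<le> z \<Longrightarrow> q \<le> (x+y)/2 \<Longrightarrow> z < r \<Longrightarrow> q < r"
  by (simp add: field_simps)

lemma min_exists:
  fixes K :: "'b::{real_inner,complete_space} set" and f :: "'b \<Rightarrow> real"
  assumes ne: "K \<noteq> {}" and kp: "\<kappa> > 0"
    and mid: "\<And>p q. p\<in>K \<Longrightarrow> q\<in>K \<Longrightarrow> (1/2) *\<^sub>R (p+q) \<in> K \<and>
               f ((1/2) *\<^sub>R (p+q)) \<le> (f p + f q)/2 - \<kappa> * (norm (p-q))\<^sup>2"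
    and lb: "\<And>p. p\<in>K \<Longrightarrow> f p \<ge> b"
    and lsc: "\<And>s p L. (\<And>n. s n \<in> K) \<Longrightarrow> s \<longlonglongrightarrow> p \<Longrightarrow> (\<lambda>n. f (s n)) \<longlonglongrightarrow> L \<Longrightarrow> p \<in> K \<and> f p \<le> L"
  shows "\<exists>p\<in>K. \<forall>q\<in>K. f p \<le> f q"
proof -
  define m where "m = Inf (f ` K)"
  have bdd: "bdd_below (f ` K)" by (rule bdd_belowI2[where m=b]) (rule lb)
  have mle: "\<And>q. q\<in>K \<Longrightarrow> m \<le> f q" unfolding m_def using bdd by (simp add: cInf_lower)
  have ex: "\<exists>p\<in>K. f p < m + inverse (real (Suc n))" for n
  proof (rule ccontr)
    assume "\<not> ?thesis"
    hence "\<And>p. p \<in> K \<Longrightarrow> m + inverse (real (Suc n)) \<le> f p" by force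
    hence "m + inverse (real (Suc n)) \<le> m" unfolding m_def using ne by (intro cInf_greatest) auto
    thus False by simp
  qed
  then obtain s where s: "\<And>n. s n \<in> K" and sf: "\<And>n. f (s n) < m + inverse (real (Suc n))"
    by metis
  have key: "\<kappa> * (norm (s n - s k))\<^sup>2 \<le> (inverse (real (Suc n)) + inverse (real (Suc k)))/2" for n k
  proof -
    have "m \<le> f ((1/2) *\<^sub>R (s n + s k))" using mid[OF s s] mle by blast
    also have "\<dots> \<le> (f (s n) + f (s k))/2 - \<kappa> * (norm (s n - s k))\<^sup>2" using mid[OF s s] by blast
    finally have "m \<le> (f (s n) + f (s k)) / 2 - \<kappa> * (norm (s n - s k))\<^sup>2" .
    moreover note sf[of n] sf[of k]
    ultimately show ?thesis
      by (rule lin_aux1)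
  qed
  have "Cauchy s"
  proof (rule CauchyI)
    fix e :: real assume e: "0 < e"
    obtain M where M: "inverse (real (Suc M)) < \<kappa> * e\<^sup>2"
      using reals_Archimedean[of "\<kappa> * e\<^sup>2"] kp e by auto
    show "\<exists>M. \<forall>m\<ge>M. \<forall>n\<ge>M. norm (s m - s n) < e"
    proof (intro exI allI impI)
      fix n k assume n: "M \<le> n" and k: "M \<le> k"
      have "inverse (real (Suc n)) \<le> inverse (real (Suc M))" using n by (simp add: field_simps)
      moreover have "inverse (real (Suc k)) \<le> inverse (real (Suc M))" using k by (simp add: field_simps)
      ultimately have "\<kappa> * (norm (s n - s k))\<^sup>2 < \<kappa> * e\<^sup>2" using key[of n k] M by (rule lin_aux2)
      hence "(norm (s n - s k))\<^sup>2 < e\<^sup>2" using kp by simp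
      thus "norm (s n - s k) < e" using e by (simp add: power_less_imp_less_base)
    qed
  qed
  then obtain p where sp: "s \<longlonglongrightarrow> p" using Cauchy_convergent_iff convergent_def by blast
  have "(\<lambda>n. f (s n)) \<longlonglongrightarrow> m"
  proof (rule tendsto_sandwich[of "\<lambda>n. m" _ _ "\<lambda>n. m + inverse (real (Suc n))"])
    show "\<forall>\<^sub>F n in sequentially. m \<le> f (s n)" using mle s by simp
    show "\<forall>\<^sub>F n in sequentially. f (s n) \<le> m + inverse (real (Suc n))" using sf by (simp add: less_imp_le)
    show "(\<lambda>n. m) \<longlonglongrightarrow> m" by simp
    show "(\<lambda>n. m + inverse (real (Suc n))) \<longlonglongrightarrow> m"
      using tendsto_add[OF tendsto_const LIMSEQ_inverse_real_of_nat, of m] by simp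
  qed
  from lsc[OF s sp this] have "p \<in> K" "f p \<le> m" by auto
  thus ?thesis using mle by force
qed

lemma nearest_var:
  fixes C :: "'a::real_inner set"
  assumes cv: "convex C" and p: "p \<in> C" and near: "\<forall>y\<in>C. norm (z - p) \<le> norm (z - y)" and y: "y \<in> C"
  shows "inner (z - p) (y - p) \<le> 0"
proof -
  have "0 \<le> -2 * inner (z - p) (y - p) + t * (norm (y - p))\<^sup>2" if t: "0 < t" "t \<le> 1" for t
  proof -
    have "(1 - t) *\<^sub>R p + t *\<^sub>R y \<in> C" using cv p y t by (intro convexD) auto
    hence "norm (z - p) \<le> norm (z - ((1 - t) *\<^sub>R p + t *\<^sub>R y))" using near by blast
    hence "(norm (z - p))\<^sup>2 \<le> (norm (z - ((1 - t) *\<^sub>R p + t *\<^sub>R y)))\<^sup>2"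
      by (simp add: power_mono)
    also have "z - ((1 - t) *\<^sub>R p + t *\<^sub>R y) = (z - p) - t *\<^sub>R (y - p)"
      by (simp add: algebra_simps)
    also have "(norm ((z - p) - t *\<^sub>R (y - p)))\<^sup>2 = (norm (z - p))\<^sup>2 - 2 * t * inner (z - p) (y - p) + t\<^sup>2 * (norm (y - p))\<^sup>2"
      unfolding power2_norm_eq_inner by (simp add: inner_diff_left inner_diff_right inner_commute algebra_simps power2_eq_square)
    finally have "0 \<le> t * (-2 * inner (z - p) (y - p) + t * (norm (y - p))\<^sup>2)"
      by (simp add: algebra_simps power2_eq_square)
    thus ?thesis using t by (simp add: zero_le_mult_iff)
  qed
  from small_t[OF this] show ?thesis by simp
qed

lemma proj_prop:
  fixes C :: "'a::{real_inner,complete_space} set"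
  assumes cv: "convex C" and cl: "closed C" and ne: "C \<noteq> {}"
  shows "proj C z \<in> C \<and> (\<forall>y\<in>C. inner (z - proj C z) (y - proj C z) \<le> 0)"
proof -
  have "\<exists>p\<in>C. \<forall>q\<in>C. (\<lambda>p. (norm (z - p))\<^sup>2) p \<le> (\<lambda>p. (norm (z - p))\<^sup>2) q"
  proof (rule min_exists[where \<kappa> = "1/4" and b = 0])
    show "C \<noteq> {}" by fact
    show "(0::real) < 1/4" by simp
    fix p q assume p: "p \<in> C" and q: "q \<in> C"
    have "(1/2) *\<^sub>R (p + q) \<in> C"
      using convexD[OF cv p q, of "1/2" "1/2"] by (simp add: scaleR_add_right)
    moreover have "(norm (z - (1/2) *\<^sub>R (p + q)))\<^sup>2 = ((norm (z - p))\<^sup>2 + (norm (z - q))\<^sup>2)/2 - 1/4 * (norm (p - q))\<^sup>2"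
    proof -
      have "z - (1/2) *\<^sub>R (p + q) = (1/2) *\<^sub>R ((z - p) + (z - q))"
        by (simp add: algebra_simps, metis scaleR_add_right scaleR_half_double)
      moreover have "(z - p) - (z - q) = -(p - q)" by simp
      ultimately show ?thesis using par_mid[of "z - p" "z - q"] by (simp only: norm_minus_cancel) simp
    qed
    ultimately show "(1/2) *\<^sub>R (p + q) \<in> C \<and> (norm (z - (1/2) *\<^sub>R (p + q)))\<^sup>2
        \<le> ((norm (z - p))\<^sup>2 + (norm (z - q))\<^sup>2)/2 - 1/4 * (norm (p - q))\<^sup>2" by simp
  next
    fix p show "0 \<le> (norm (z - p))\<^sup>2" by simp
  next
    fix s p L assume s: "\<And>n. s n \<in> C" and sp: "s \<longlonglongrightarrow> p" and L: "(\<lambda>n. (norm (z - s n))\<^sup>2) \<longlonglongrightarrow> L"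
    have "p \<in> C" using cl s sp closed_sequentially by blast
    moreover have "(\<lambda>n. (norm (z - s n))\<^sup>2) \<longlonglongrightarrow> (norm (z - p))\<^sup>2"
      by (intro tendsto_intros sp)
    hence "(norm (z - p))\<^sup>2 = L" using L LIMSEQ_unique by blast
    ultimately show "p \<in> C \<and> (norm (z - p))\<^sup>2 \<le> L" by simp
  qed
  then obtain p where p: "p \<in> C" and pm: "\<forall>q\<in>C. (norm (z - p))\<^sup>2 \<le> (norm (z - q))\<^sup>2" by auto
  have near: "\<forall>q\<in>C. norm (z - p) \<le> norm (z - q)"
    using pm by (auto intro: power2_le_imp_le)
  have "proj C z = p"
    unfolding proj_def
  proof (rule the_equality)
    show "p \<in> C \<and> (\<forall>y\<in>C. norm (z - p) \<le> norm (z - y))" using p near by blast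
    fix p' assume h: "p' \<in> C \<and> (\<forall>y\<in>C. norm (z - p') \<le> norm (z - y))"
    have 1: "inner (z - p') (p - p') \<le> 0" using nearest_var[OF cv _ _ p] h by blast
    have 2: "inner (z - p) (p' - p) \<le> 0" using nearest_var[OF cv p near] h by blast
    have "inner (p - p') (p - p') = inner (z - p') (p - p') + inner (z - p) (p' - p)"
      by (simp add: inner_diff_left inner_diff_right inner_commute algebra_simps)
    hence "inner (p - p') (p - p') \<le> 0" using 1 2 by linarith
    thus "p' = p" by (metis antisym inner_ge_zero inner_eq_zero_iff right_minus_eq)
  qed
  thus ?thesis using p nearest_var[OF cv p near] by simp
qed

lemma minty0:
  fixes B :: "'a::{real_inner,complete_space} \<Rightarrow> 'a set"
  assumes mm: "maximal_monotone B"
  shows "\<exists>x. -x \<in> B x"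
proof -
  have mono: "\<And>x y u v. u \<in> B x \<Longrightarrow> v \<in> B y \<Longrightarrow> inner (u - v) (x - y) \<ge> 0"
    using mm unfolding maximal_monotone_def monotone_op_def by blast
  have max: "\<And>x u. (\<And>y v. v \<in> B y \<Longrightarrow> inner (u - v) (x - y) \<ge> 0) \<Longrightarrow> u \<in> B x"
    using mm unfolding maximal_monotone_def by blast
  define G where "G = {g :: 'a \<times> 'a. snd g \<in> B (fst g)}"
  define \<phi> where "\<phi> g p = inner p (snd g, fst g) - inner (fst g) (snd g)" for g p :: "'a \<times> 'a"
  define F where "F p = (SUP g\<in>G. \<phi> g p)" for p
  define K where "K = {p. bdd_above ((\<lambda>g. \<phi> g p) ` G)}"
  define f where "f p = F p + (norm p)\<^sup>2 / 2" for p
  have bddK: "p \<in> K" if "\<And>g. g \<in> G \<Longrightarrow> \<phi> g p \<le> M" for p M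
    unfolding K_def using bdd_aboveI2[of G "\<lambda>g. \<phi> g p" M] that by simp
  have Gne: "G \<noteq> {}"
  proof
    assume "G = {}"
    hence "0 \<in> B 0" by (intro max) (auto simp: G_def)
    with \<open>G = {}\<close> show False by (auto simp: G_def)
  qed
  have phiG: "\<phi> g h \<le> inner (fst h) (snd h)" if "g \<in> G" "h \<in> G" for g h
  proof -
    obtain y v where g: "g = (y, v)" by fastforce
    obtain x u where h: "h = (x, u)" by fastforce
    have "0 \<le> inner (u - v) (x - y)" using mono that g h by (auto simp: G_def)
    thus ?thesis unfolding \<phi>_def g h
      by (simp add: inner_diff_left inner_diff_right inner_commute)
  qed
  have FK: "\<phi> g p \<le> F p" if "p \<in> K" "g \<in> G" for p g
    using that unfolding F_def K_def by (auto intro: cSUP_upper)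
  have Flow: "F p \<ge> inner (fst p) (snd p)" if p: "p \<in> K" for p
  proof (rule ccontr)
    obtain x u where pxu: "p = (x, u)" by fastforce
    assume "\<not> ?thesis"
    hence lt: "F p < inner x u" using pxu by simp
    have "u \<in> B x"
    proof (rule max)
      fix y v assume v: "v \<in> B y"
      hence "\<phi> (y, v) p \<le> F p" using FK p by (auto simp: G_def)
      hence "inner x v + inner u y - inner y v < inner x u" using lt pxu by (simp add: \<phi>_def)
      thus "0 \<le> inner (u - v) (x - y)"
        by (simp add: inner_diff_left inner_diff_right inner_commute)
    qed
    hence "\<phi> (x, u) p \<le> F p" using FK p by (auto simp: G_def)
    thus False using lt pxu by (simp add: \<phi>_def inner_commute)
  qed
  have normp: "(norm p)\<^sup>2 = inner (fst p) (fst p) + inner (snd p) (snd p)" for p :: "'a \<times> 'a"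
    by (cases p) (simp add: power2_norm_eq_inner)
  have GK: "G \<subseteq> K"
  proof
    fix h assume h: "h \<in> G"
    have "bdd_above ((\<lambda>g. \<phi> g h) ` G)"
      by (rule bdd_aboveI2[where M = "inner (fst h) (snd h)"]) (rule phiG[OF _ h])
    thus "h \<in> K" by (simp add: K_def)
  qed
  have "\<exists>p\<in>K. \<forall>q\<in>K. f p \<le> f q"
  proof (rule min_exists[where \<kappa> = "1/8" and b = 0])
    show "K \<noteq> {}" using Gne GK by blast
    show "(0::real) < 1/8" by simp
  next
    fix p assume p: "p \<in> K"
    obtain x u where pxu: "p = (x, u)" by fastforce
    have "inner x u \<le> F p" using Flow[OF p] pxu by simp
    moreover have "0 \<le> inner (x + u) (x + u)" by simp
    ultimately show "0 \<le> f p" unfolding f_def normp pxu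
      by (simp add: inner_add_left inner_add_right inner_commute field_simps)
  next
    fix p q assume p: "p \<in> K" and q: "q \<in> K"
    let ?m = "(1/2) *\<^sub>R (p + q)"
    have phim: "\<phi> g ?m = (\<phi> g p + \<phi> g q) / 2" for g
      by (simp add: \<phi>_def inner_add_left field_simps)
    have le: "\<phi> g ?m \<le> (F p + F q)/2" if "g \<in> G" for g
      using FK[OF p that] FK[OF q that] phim[of g] by simp
    hence mK: "?m \<in> K" by (rule bddK)
    have "F ?m \<le> (F p + F q)/2" unfolding F_def[of ?m] by (rule cSUP_least[OF Gne le])
    moreover note par_mid[of p q]
    ultimately show "?m \<in> K \<and> f ?m \<le> (f p + f q)/2 - 1/8 * (norm (p - q))\<^sup>2"
      using mK unfolding f_def by (simp add: field_simps)
  next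
    fix s p L assume s: "\<And>n. s n \<in> K" and sp: "s \<longlonglongrightarrow> p" and L: "(\<lambda>n. f (s n)) \<longlonglongrightarrow> L"
    have Fs: "(\<lambda>n. F (s n)) \<longlonglongrightarrow> L - (norm p)\<^sup>2/2"
    proof -
      have "(\<lambda>n. f (s n) - (norm (s n))\<^sup>2/2) \<longlonglongrightarrow> L - (norm p)\<^sup>2/2"
        by (intro tendsto_intros L sp) auto
      thus ?thesis by (simp add: f_def)
    qed
    have bnd: "\<phi> g p \<le> L - (norm p)\<^sup>2/2" if g: "g \<in> G" for g
    proof (rule LIMSEQ_le[OF _ Fs])
      show "(\<lambda>n. \<phi> g (s n)) \<longlonglongrightarrow> \<phi> g p" unfolding \<phi>_def by (intro tendsto_intros sp)
      show "\<exists>N. \<forall>n\<ge>N. \<phi> g (s n) \<le> F (s n)" using FK[OF s g] by blast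
    qed
    hence pK: "p \<in> K" by (rule bddK)
    have "F p \<le> L - (norm p)\<^sup>2/2" unfolding F_def[of p] by (rule cSUP_least[OF Gne bnd])
    thus "p \<in> K \<and> f p \<le> L" using pK by (simp add: f_def)
  qed
  then obtain p0 where p0K: "p0 \<in> K" and p0min: "\<And>q. q \<in> K \<Longrightarrow> f p0 \<le> f q" by blast
  obtain x u where p0: "p0 = (x, u)" by fastforce
  have var: "0 \<le> inner y v - F p0 + inner p0 (g - p0)" if g: "g \<in> G" "g = (y, v)" for g y v
  proof -
    have "0 \<le> (inner y v - F p0 + inner p0 (g - p0)) + t * ((norm (g - p0))\<^sup>2 / 2)"
      if t: "0 < t" "t \<le> 1" for t
    proof -
      let ?q = "p0 + t *\<^sub>R (g - p0)"
      have phiq: "\<phi> g' ?q \<le> (1 - t) * F p0 + t * inner y v" if g': "g' \<in> G" for g'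
      proof -
        have "\<phi> g' ?q = (1 - t) * \<phi> g' p0 + t * \<phi> g' g"
          by (simp add: \<phi>_def inner_add_left inner_diff_left algebra_simps)
        also have "\<dots> \<le> (1 - t) * F p0 + t * inner y v"
        proof (rule add_mono)
          show "(1 - t) * \<phi> g' p0 \<le> (1 - t) * F p0" using FK[OF p0K g'] t by (simp add: mult_left_mono)
          show "t * \<phi> g' g \<le> t * inner y v" using phiG[OF g' g(1)] g(2) t by (simp add: mult_left_mono)
        qed
        finally show ?thesis .
      qed
      hence qK: "?q \<in> K" by (rule bddK)
      have "F ?q \<le> (1 - t) * F p0 + t * inner y v" unfolding F_def[of ?q] by (rule cSUP_least[OF Gne phiq])
      moreover have "f p0 \<le> f ?q" using p0min[OF qK] .
      moreover have "(norm ?q)\<^sup>2 = (norm p0)\<^sup>2 + 2 * t * inner p0 (g - p0) + t\<^sup>2 * (norm (g - p0))\<^sup>2"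
        unfolding power2_norm_eq_inner
        by (simp add: inner_add_left inner_add_right inner_commute algebra_simps power2_eq_square)
      ultimately have "0 \<le> t * ((inner y v - F p0 + inner p0 (g - p0)) + t * ((norm (g - p0))\<^sup>2 / 2))"
        unfolding f_def by (simp add: algebra_simps power2_eq_square)
      thus ?thesis using t by (simp add: zero_le_mult_iff)
    qed
    from small_t[OF this] show ?thesis .
  qed
  have Fp0: "inner x u \<le> F p0" using Flow[OF p0K] p0 by simp
  have ineq: "inner (x + u) (x + u) \<le> inner ((-x) - v) ((-u) - y)" if v: "v \<in> B y" for y v
  proof -
    have "0 \<le> inner y v - F p0 + inner p0 ((y, v) - p0)" using var[of "(y, v)" y v] v by (simp add: G_def)
    hence "F p0 + inner x x + inner u u \<le> inner y v + inner x y + inner u v"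
      using p0 by (simp add: inner_diff_right)
    thus ?thesis using Fp0
      by (simp add: inner_add_left inner_add_right inner_diff_left inner_diff_right inner_commute)
  qed
  have xu: "-x \<in> B (-u)"
    by (rule max) (use ineq in \<open>auto intro: order_trans[OF inner_ge_zero]\<close>)
  have "inner (x + u) (x + u) \<le> 0" using ineq[OF xu] by simp
  hence "x + u = 0" by (metis antisym inner_ge_zero inner_eq_zero_iff)
  hence "-u = x" by (simp add: add_eq_0_iff)
  thus ?thesis using xu by auto
qed

lemma resolvent_prop:
  fixes B :: "'a::{real_inner,complete_space} \<Rightarrow> 'a set"
  assumes mm: "maximal_monotone B" and a: "\<alpha> > 0"
  shows "\<exists>b\<in>B (resolvent \<alpha> B w). w = resolvent \<alpha> B w + \<alpha> *\<^sub>R b"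
proof -
  have mono: "\<And>x y u v. u \<in> B x \<Longrightarrow> v \<in> B y \<Longrightarrow> inner (u - v) (x - y) \<ge> 0"
    using mm unfolding maximal_monotone_def monotone_op_def by blast
  have max: "\<And>x u. (\<And>y v. v \<in> B y \<Longrightarrow> inner (u - v) (x - y) \<ge> 0) \<Longrightarrow> u \<in> B x"
    using mm unfolding maximal_monotone_def by blast
  define B' where "B' z = (\<lambda>b. \<alpha> *\<^sub>R b) ` B (z + w)" for z
  have "maximal_monotone B'"
    unfolding maximal_monotone_def monotone_op_def
  proof (intro conjI allI impI)
    fix x y u v assume u: "u \<in> B' x" and v: "v \<in> B' y"
    then obtain a c where a1: "a \<in> B (x + w)" "u = \<alpha> *\<^sub>R a" and c1: "c \<in> B (y + w)" "v = \<alpha> *\<^sub>R c"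
      by (auto simp: B'_def)
    have "0 \<le> inner (a - c) ((x + w) - (y + w))" using mono[OF a1(1) c1(1)] .
    hence "0 \<le> \<alpha> * inner (a - c) (x - y)" using a by simp
    thus "0 \<le> inner (u - v) (x - y)" using a1 c1 by (simp add: inner_diff_left right_diff_distrib)
  next
    fix x u assume h: "\<forall>y v. v \<in> B' y \<longrightarrow> 0 \<le> inner (u - v) (x - y)"
    have "(1/\<alpha>) *\<^sub>R u \<in> B (x + w)"
    proof (rule max)
      fix y' v' assume v': "v' \<in> B y'"
      have "\<alpha> *\<^sub>R v' \<in> B' (y' - w)" using v' unfolding B'_def by auto
      hence "0 \<le> inner (u - \<alpha> *\<^sub>R v') (x - (y' - w))" using h by blast
      hence "0 \<le> (1/\<alpha>) * inner (u - \<alpha> *\<^sub>R v') (x - (y' - w))" using a by simp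
      also have "(1/\<alpha>) * inner (u - \<alpha> *\<^sub>R v') (x - (y' - w)) = inner ((1/\<alpha>) *\<^sub>R u - v') ((x + w) - y')"
        using a by (simp add: inner_diff_left algebra_simps)
      finally show "0 \<le> inner ((1/\<alpha>) *\<^sub>R u - v') ((x + w) - y')" .
    qed
    hence "\<alpha> *\<^sub>R ((1/\<alpha>) *\<^sub>R u) \<in> B' x" unfolding B'_def by (rule imageI)
    thus "u \<in> B' x" using a by simp
  qed
  from minty0[OF this] obtain z where "-z \<in> B' z" by blast
  then obtain b where b: "b \<in> B (z + w)" "-z = \<alpha> *\<^sub>R b" by (auto simp: B'_def)
  define P where "P y = (w \<in> (\<lambda>b. y + \<alpha> *\<^sub>R b) ` B y)" for y
  have "w = (z + w) + \<alpha> *\<^sub>R b" using b(2) by (metis add.commute add_minus_cancel add.assoc)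
  hence Py: "P (z + w)" unfolding P_def using b(1) by blast
  have uniq: "y1 = y2" if hP: "P y1" "P y2" for y1 y2
  proof -
    obtain b1 b2 where b1: "b1 \<in> B y1" "w = y1 + \<alpha> *\<^sub>R b1" and b2: "b2 \<in> B y2" "w = y2 + \<alpha> *\<^sub>R b2"
    proof -
      have "\<exists>b1\<in>B y1. w = y1 + \<alpha> *\<^sub>R b1" "\<exists>b2\<in>B y2. w = y2 + \<alpha> *\<^sub>R b2"
        using hP unfolding P_def by (auto simp: image_iff)
      thus ?thesis using that by blast
    qed
    have d: "y1 - y2 = \<alpha> *\<^sub>R (b2 - b1)" using b1(2) b2(2) by (simp add: algebra_simps)
    have "0 \<le> inner (b1 - b2) (y1 - y2)" using mono[OF b1(1) b2(1)] .
    hence "0 \<le> - \<alpha> * inner (b1 - b2) (b1 - b2)" unfolding d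
      by (simp add: inner_diff_left inner_diff_right inner_commute algebra_simps)
    hence "inner (b1 - b2) (b1 - b2) \<le> 0" using a by (simp add: mult_le_0_iff)
    hence "b1 = b2" by (metis antisym inner_ge_zero inner_eq_zero_iff right_minus_eq)
    thus ?thesis using d by simp
  qed
  have eqR: "resolvent \<alpha> B w = (THE y. P y)" unfolding resolvent_def P_def by (rule refl)
  have "P (THE y. P y)" by (rule theI[of P "z + w"]) (use Py uniq in auto)
  hence "P (resolvent \<alpha> B w)" unfolding eqR .
  hence "w \<in> (\<lambda>b. resolvent \<alpha> B w + \<alpha> *\<^sub>R b) ` B (resolvent \<alpha> B w)" unfolding P_def .
  thus ?thesis by (auto simp: image_iff)
qed

theorem lemma4p11:
  fixes A1 A2 :: "'a::{real_inner,complete_space} \<Rightarrow> 'a"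
    and B :: "'a \<Rightarrow> 'a set"
    and \<beta> \<theta> \<delta> \<delta>bar \<alpha>m1 :: real
    and x :: "nat \<Rightarrow> 'a" and \<alpha> :: "nat \<Rightarrow> real" and N :: nat
    and A :: "'a \<Rightarrow> 'a" and \<alpha>prev :: "nat \<Rightarrow> real"
    and xbar_ls :: "nat \<Rightarrow> nat \<Rightarrow> 'a" and xbar :: "nat \<Rightarrow> 'a"
    and T \<Gamma> :: "nat \<Rightarrow> 'a set"
  assumes beta_pos: "\<beta> > 0" and coco: "cocoercive \<beta> A1"
    and A2_mm: "maximal_monotone (\<lambda>z. {A2 z})" and A2_uc: "uniformly_continuous_on UNIV A2"
    and B_mm: "maximal_monotone B"
    and A_def: "A \<equiv> \<lambda>z. A1 z + A2 z"
    and zer_ne: "zer_sum A B \<noteq> {}"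
    and theta: "0 < \<theta>" "\<theta> < 1" and delta: "0 < \<delta>" "\<delta> < 1"
    and deltabar: "\<delta>bar > 0" "1 - \<delta> - \<delta>bar > 0"
    and alpham1: "\<alpha>m1 > 0" "\<alpha>m1 \<le> 4 * \<beta> * \<delta>bar"
    and alphaprev_def: "\<alpha>prev \<equiv> \<lambda>k. if k = 0 then \<alpha>m1 else \<alpha> (k - 1)"
    and xbar_ls_def: "xbar_ls \<equiv> \<lambda>k j. resolvent (\<alpha>prev k * \<theta> ^ j) B
                                   (x k - (\<alpha>prev k * \<theta> ^ j) *\<^sub>R A (x k))"
    and linesearch: "\<And>k. k \<le> N \<Longrightarrow> \<alpha> k = \<alpha>prev k * \<theta> ^ (LEAST j.
           \<alpha>prev k * \<theta> ^ j * inner (A2 (x k) - A2 (xbar_ls k j)) (x k - xbar_ls k j)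
             \<le> \<delta> * (norm (x k - xbar_ls k j))\<^sup>2)"
    and xbar_def: "xbar \<equiv> \<lambda>k. resolvent (\<alpha> k) B (x k - \<alpha> k *\<^sub>R A (x k))"
    and T_def: "T \<equiv> \<lambda>k. {z. inner ((1 / \<alpha> k) *\<^sub>R (x k - xbar k) - (A2 (x k) - A2 (xbar k)))
                                 (z - xbar k)
                           \<le> \<delta>bar / \<alpha> k * (norm (x k - xbar k))\<^sup>2}"
    and Gamma_def: "\<Gamma> \<equiv> \<lambda>k. {z. inner (x 0 - x k) (z - x k) \<le> 0}"
    and step: "\<And>k. k < N \<Longrightarrow> x (Suc k) = proj (T k \<inter> \<Gamma> k) (x 0)"
  shows "\<forall>k \<le> N. zer_sum A B \<subseteq> T k \<inter> \<Gamma> k"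
proof -
  have A2mono: "\<And>p q. 0 \<le> inner (A2 p - A2 q) (p - q)"
  proof -
    fix p q
    have "monotone_op (\<lambda>z. {A2 z})" using A2_mm unfolding maximal_monotone_def by (rule conjunct1)
    hence "\<forall>x y u v. u \<in> {A2 x} \<longrightarrow> v \<in> {A2 y} \<longrightarrow> 0 \<le> inner (u - v) (x - y)"
      unfolding monotone_op_def .
    thus "0 \<le> inner (A2 p - A2 q) (p - q)" by blast
  qed
  have Bmono: "\<And>p q u v. u \<in> B p \<Longrightarrow> v \<in> B q \<Longrightarrow> 0 \<le> inner (u - v) (p - q)"
    using B_mm unfolding maximal_monotone_def monotone_op_def by blast
  have cc: "\<And>p q. \<beta> * (norm (A1 p - A1 q))\<^sup>2 \<le> inner (A1 p - A1 q) (p - q)"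
    using coco unfolding cocoercive_def by blast
  have exj: "\<exists>j. \<alpha> k = \<alpha>prev k * \<theta> ^ j" if "k \<le> N" for k
    using linesearch[OF that] by blast
  have ap0: "\<alpha>prev 0 = \<alpha>m1" and apS: "\<And>k. \<alpha>prev (Suc k) = \<alpha> k"
    unfolding alphaprev_def by simp_all
  have apos: "k \<le> N \<longrightarrow> 0 < \<alpha> k \<and> \<alpha> k \<le> \<alpha>m1" for k
  proof (induction k)
    case 0
    show ?case
    proof
      assume "0 \<le> N"
      then obtain j where aj: "\<alpha> 0 = \<alpha>m1 * \<theta> ^ j" using exj[of 0] ap0 by auto
      have "0 < \<theta> ^ j" "\<theta> ^ j \<le> 1" using theta by (auto intro: power_le_one)
      thus "0 < \<alpha> 0 \<and> \<alpha> 0 \<le> \<alpha>m1" using aj alpham1 by (simp add: mult_left_le)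
    qed
  next
    case (Suc k)
    show ?case
    proof
      assume kN: "Suc k \<le> N"
      then obtain j where aj: "\<alpha> (Suc k) = \<alpha> k * \<theta> ^ j" using exj[of "Suc k"] apS by auto
      have "0 < \<theta> ^ j" "\<theta> ^ j \<le> 1" using theta by (auto intro: power_le_one)
      moreover have "0 < \<alpha> k" "\<alpha> k \<le> \<alpha>m1" using Suc kN by auto
      ultimately have "0 < \<alpha> k * \<theta> ^ j" "\<alpha> k * \<theta> ^ j \<le> \<alpha> k"
        using mult_left_le[of "\<theta> ^ j" "\<alpha> k"] by auto
      thus "0 < \<alpha> (Suc k) \<and> \<alpha> (Suc k) \<le> \<alpha>m1" using aj \<open>\<alpha> k \<le> \<alpha>m1\<close> by simp
    qed
  qed
  have Tk: "T k = {z. inner ((1 / \<alpha> k) *\<^sub>R (x k - xbar k) - (A2 (x k) - A2 (xbar k))) (z - xbar k)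
                           \<le> \<delta>bar / \<alpha> k * (norm (x k - xbar k))\<^sup>2}" for k
    by (simp add: T_def)
  have Gk: "\<Gamma> k = {z. inner (x 0 - x k) (z - x k) \<le> 0}" for k by (simp add: Gamma_def)
  have Tpart: "z \<in> T k" if kN: "k \<le> N" and z: "z \<in> zer_sum A B" for k z
  proof -
    define a where "a = \<alpha> k"
    define xk where "xk = x k"
    define xb where "xb = xbar k"
    define d where "d = xk - xb"
    have a0: "0 < a" and a1: "a \<le> \<alpha>m1" using apos[of k] kN by (auto simp: a_def)
    have xb_eq: "xb = resolvent a B (xk - a *\<^sub>R A xk)" by (simp add: xb_def xbar_def a_def xk_def)
    obtain b where b: "b \<in> B xb" "xk - a *\<^sub>R A xk = xb + a *\<^sub>R b"
      using resolvent_prop[OF B_mm a0, of "xk - a *\<^sub>R A xk"] unfolding xb_eq[symmetric] by blast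
    obtain c where c: "c \<in> B z" "A z + c = 0" using z unfolding zer_sum_def by auto
    have "- A z = c" using c(2) by (simp only: neg_eq_iff_add_eq_0)
    hence cz: "c = - (A1 z + A2 z)" unfolding A_def by simp
    have "d = a *\<^sub>R (A xk + b)" using b(2) unfolding d_def by (simp add: algebra_simps)
    hence "(1 / a) *\<^sub>R d = A1 xk + A2 xk + b" using a0 unfolding A_def by simp
    hence w_eq: "(1 / a) *\<^sub>R d - (A2 xk - A2 xb) = b + A1 xk + A2 xb" by (simp add: algebra_simps)
    define e where "e = A1 xk - A1 z"
    have f1: "inner b (z - xb) \<le> inner (A1 z + A2 z) (xb - z)"
    proof -
      have "0 \<le> inner (b - c) (xb - z)" by (rule Bmono[OF b(1) c(1)])
      thus ?thesis unfolding cz by (simp add: inner_diff_left inner_diff_right inner_add_left algebra_simps)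
    qed
    have E: "inner ((1 / a) *\<^sub>R d - (A2 xk - A2 xb)) (z - xb) = inner b (z - xb) + inner (A1 xk) (z - xb) + inner (A2 xb) (z - xb)"
      unfolding w_eq by (simp add: inner_add_left)
    have E2: "inner (A1 z + A2 z) (xb - z) + inner (A1 xk) (z - xb) + inner (A2 xb) (z - xb)
        = inner e d - inner e (xk - z) - inner (A2 xb - A2 z) (xb - z)"
      unfolding e_def d_def by (simp add: inner_add_left inner_diff_left inner_diff_right algebra_simps)
    have f2: "0 \<le> inner (A2 xb - A2 z) (xb - z)" by (rule A2mono)
    have f4: "\<beta> * (norm e)\<^sup>2 \<le> inner e (xk - z)" unfolding e_def by (rule cc)
    have f5: "inner e d \<le> \<beta> * (norm e)\<^sup>2 + \<delta>bar / a * (norm d)\<^sup>2"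
    proof -
      have "0 \<le> (norm ((2 * \<beta>) *\<^sub>R e - d))\<^sup>2" by simp
      also have "(norm ((2 * \<beta>) *\<^sub>R e - d))\<^sup>2 = 4 * \<beta>\<^sup>2 * (norm e)\<^sup>2 - 4 * \<beta> * inner e d + (norm d)\<^sup>2"
        unfolding power2_norm_eq_inner
        by (simp add: inner_diff_left inner_diff_right inner_commute algebra_simps power2_eq_square)
      finally have g: "4 * \<beta> * inner e d \<le> 4 * \<beta> * (\<beta> * (norm e)\<^sup>2 + (norm d)\<^sup>2 / (4 * \<beta>))"
        using beta_pos by (simp add: algebra_simps power2_eq_square)
      hence "inner e d \<le> \<beta> * (norm e)\<^sup>2 + (norm d)\<^sup>2 / (4 * \<beta>)"
        using beta_pos by (simp add: mult_le_cancel_left_pos)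
      moreover have "a \<le> 4 * \<beta> * \<delta>bar" using a1 alpham1 by linarith
      hence "1 / (4 * \<beta>) \<le> \<delta>bar / a"
        using a0 beta_pos by (simp add: field_simps)
      hence "1 / (4 * \<beta>) * (norm d)\<^sup>2 \<le> \<delta>bar / a * (norm d)\<^sup>2"
        by (rule mult_right_mono) simp
      hence "(norm d)\<^sup>2 / (4 * \<beta>) \<le> \<delta>bar / a * (norm d)\<^sup>2" by simp
      ultimately show ?thesis by linarith
    qed
    have "inner ((1 / a) *\<^sub>R d - (A2 xk - A2 xb)) (z - xb) \<le> \<delta>bar / a * (norm d)\<^sup>2"
      using E E2 f1 f2 f4 f5 by linarith
    thus ?thesis unfolding Tk a_def d_def xk_def xb_def by simp
  qed
  have cvx: "convex {z. inner p (z - q) \<le> r}" "closed {z. inner p (z - q) \<le> r}" for p q :: 'a and r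
  proof -
    have eq: "{z. inner p (z - q) \<le> r} = {z. inner p z \<le> r + inner p q}" by (auto simp: inner_diff_right)
    show "convex {z. inner p (z - q) \<le> r}" unfolding eq by (rule convex_halfspace_le)
    show "closed {z. inner p (z - q) \<le> r}" unfolding eq by (rule closed_halfspace_le)
  qed
  have Gpart: "k \<le> N \<longrightarrow> zer_sum A B \<subseteq> \<Gamma> k" for k
  proof (induction k)
    case 0
    show ?case by (simp add: Gk)
  next
    case (Suc k)
    show ?case
    proof
      assume kN: "Suc k \<le> N"
      define C where "C = T k \<inter> \<Gamma> k"
      have sub: "zer_sum A B \<subseteq> C" using Suc kN Tpart[of k] by (auto simp: C_def)
      have "convex C" unfolding C_def Tk Gk by (intro convex_Int cvx)
      moreover have "closed C" unfolding C_def Tk Gk by (intro closed_Int cvx)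
      moreover have "C \<noteq> {}" using sub zer_ne by blast
      ultimately have pp: "\<forall>y\<in>C. inner (x 0 - proj C (x 0)) (y - proj C (x 0)) \<le> 0"
        using proj_prop by blast
      have "x (Suc k) = proj C (x 0)" using step[of k] kN by (simp add: C_def)
      thus "zer_sum A B \<subseteq> \<Gamma> (Suc k)" using pp sub unfolding Gk by auto
    qed
  qed
  show ?thesis using Tpart Gpart by blast
qed

end
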